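(* Let $\phi\in L^\infty$. If the slant Hankel operator $L_\phi=WH_\phi$ on $H^2$ is a slant H-Toeplitz operator (i.e. $L_\phi=V_\psi$ for some $\psi\in L^\infty$), then $\phi\in(z+z^3H^\infty)^\perp$, where $z+z^3H^\infty=\{z+z^3\psi:\psi\in H^\infty\}$ and $\perp$ denotes the orthogonal complement in $L^2$.
   Context: $L^2=L^2(\mathbb{T})$ with orthonormal basis $e_n(z)=z^n$, $n\in\mathbb{Z}$; $H^2$ is the closed span of $\{e_n\}_{n\ge0}$, $H^\infty=H^2\cap L^\infty$, $P:L^2\to H^2$ the orthogonal projection, $M_\phi$ multiplication by $\phi$. $W:L^2\to L^2$: $We_n=e_{n/2}$ for $n$ even, $0$ for $n$ odd. $J:H^2\to L^2$, $Je_n=e_{-n-1}$ ($n\ge0$); $H_\phi=PM_\phi J$ is the Hankel operator and $L_\phi=WH_\phi$. $K:H^2\to L^2$: $Ke_{2n}=e_n$, $Ke_{2n+1}=e_{-n-1}$ ($n\ge0$). The slant H-Toeplitz operator with symbol $\psi$ is $V_\psi=WPM_\psi K:H^2\to H^2$. *)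

theory Defs
  imports "HOL-Analysis.Analysis"
begin

(* Functions on the unit circle T are represented by phi :: complex => complex,
   restricted to T via t |-> phi (cis t), t in [0, 2 pi], normalized Lebesgue measure. *)

definition Linf :: "(complex \<Rightarrow> complex) \<Rightarrow> bool" where
  "Linf phi \<longleftrightarrow> (\<lambda>t. phi (cis t)) \<in> borel_measurable (lebesgue_on {0..2*pi}) \<and>
     (\<exists>B. AE t in lebesgue_on {0..2*pi}. norm (phi (cis t)) \<le> B)"

definition fourier :: "(complex \<Rightarrow> complex) \<Rightarrow> int \<Rightarrow> complex" where
  "fourier phi n = (LINT t|lebesgue_on {0..2*pi}. phi (cis t) * cis (- (of_int n * t))) / (2 * pi)"

definition l2inner :: "(complex \<Rightarrow> complex) \<Rightarrow> (complex \<Rightarrow> complex) \<Rightarrow> complex" where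
  "l2inner f g = (LINT t|lebesgue_on {0..2*pi}. f (cis t) * cnj (g (cis t))) / (2 * pi)"

definition Hinf :: "(complex \<Rightarrow> complex) set" where
  "Hinf = {h. Linf h \<and> (\<forall>n<0. fourier h n = 0)}"

(* Elements of L^2 are identified with their coefficient sequences w.r.t. the
   orthonormal basis e_n (n in Z); H^2 = sequences supported on n >= 0. *)
definition l2seq :: "(int \<Rightarrow> complex) \<Rightarrow> bool" where
  "l2seq f \<longleftrightarrow> (\<lambda>n. (norm (f n))\<^sup>2) summable_on UNIV"

definition H2seq :: "(int \<Rightarrow> complex) \<Rightarrow> bool" where
  "H2seq f \<longleftrightarrow> l2seq f \<and> (\<forall>n<0. f n = 0)"

definition Mop :: "(complex \<Rightarrow> complex) \<Rightarrow> (int \<Rightarrow> complex) \<Rightarrow> (int \<Rightarrow> complex)" where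
  "Mop phi f = (\<lambda>n. \<Sum>\<^sub>\<infinity>k\<in>UNIV. fourier phi (n - k) * f k)"

definition Pop :: "(int \<Rightarrow> complex) \<Rightarrow> (int \<Rightarrow> complex)" where
  "Pop f = (\<lambda>n. if n \<ge> 0 then f n else 0)"

(* W e_n = e_{n/2} (n even), 0 (n odd) *)
definition Wop :: "(int \<Rightarrow> complex) \<Rightarrow> (int \<Rightarrow> complex)" where
  "Wop f = (\<lambda>n. f (2 * n))"

(* J e_n = e_{-n-1} *)
definition Jop :: "(int \<Rightarrow> complex) \<Rightarrow> (int \<Rightarrow> complex)" where
  "Jop f = (\<lambda>m. if m < 0 then f (- m - 1) else 0)"

(* K e_{2n} = e_n, K e_{2n+1} = e_{-n-1} *)
definition Kop :: "(int \<Rightarrow> complex) \<Rightarrow> (int \<Rightarrow> complex)" where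
  "Kop f = (\<lambda>m. if m \<ge> 0 then f (2 * m) else f (- 2 * m - 1))"

definition Hankel :: "(complex \<Rightarrow> complex) \<Rightarrow> (int \<Rightarrow> complex) \<Rightarrow> (int \<Rightarrow> complex)" where
  "Hankel phi f = Pop (Mop phi (Jop f))"

definition slantHankel :: "(complex \<Rightarrow> complex) \<Rightarrow> (int \<Rightarrow> complex) \<Rightarrow> (int \<Rightarrow> complex)" where
  "slantHankel phi f = Wop (Hankel phi f)"

definition slantHToeplitz :: "(complex \<Rightarrow> complex) \<Rightarrow> (int \<Rightarrow> complex) \<Rightarrow> (int \<Rightarrow> complex)" where
  "slantHToeplitz psi f = Wop (Pop (Mop psi (Kop f)))"

end

theory Submission
  imports Defs "HOL-Analysis.Kronecker_Approximation_Theorem"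
begin


definition dlt :: "int \<Rightarrow> int \<Rightarrow> complex" where "dlt j = (\<lambda>k. if k = j then 1 else 0)"

lemma Mop_dlt: "Mop phi (dlt j) n = fourier phi (n - j)"
proof -
  have "Mop phi (dlt j) n = (\<Sum>\<^sub>\<infinity>k\<in>{j}. fourier phi (n - k) * dlt j k)"
    unfolding Mop_def by (rule infsum_cong_neutral) (auto simp: dlt_def)
  then show ?thesis by (simp add: dlt_def)
qed

lemma H2seq_dlt: "j \<ge> 0 \<Longrightarrow> H2seq (dlt j)"
proof -
  have "(\<lambda>n. (norm (dlt j n))\<^sup>2) summable_on {j}" by simp
  then have "(\<lambda>n. (norm (dlt j n))\<^sup>2) summable_on UNIV"
    by (rule summable_on_cong_neutral[THEN iffD1, rotated -1]) (auto simp: dlt_def)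
  then show "j \<ge> 0 \<Longrightarrow> H2seq (dlt j)" by (auto simp: H2seq_def l2seq_def dlt_def)
qed

lemma Jop_dlt: "j \<ge> 0 \<Longrightarrow> Jop (dlt j) = dlt (-j-1)"
  by (auto simp: Jop_def dlt_def fun_eq_iff)

lemma Kop_dlt_even: "k \<ge> 0 \<Longrightarrow> Kop (dlt (2*k)) = dlt k"
  unfolding Kop_def dlt_def fun_eq_iff by (auto; presburger)

lemma Kop_dlt_odd: "k \<ge> 0 \<Longrightarrow> Kop (dlt (2*k+1)) = dlt (-k-1)"
  unfolding Kop_def dlt_def fun_eq_iff by (auto; presburger)

lemma sH_dlt: "j \<ge> 0 \<Longrightarrow> m \<ge> 0 \<Longrightarrow> slantHankel phi (dlt j) m = fourier phi (2*m+j+1)"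
  by (simp add: slantHankel_def Hankel_def Wop_def Pop_def Jop_dlt Mop_dlt algebra_simps)

lemma sT_even: "k \<ge> 0 \<Longrightarrow> m \<ge> 0 \<Longrightarrow> slantHToeplitz psi (dlt (2*k)) m = fourier psi (2*m-k)"
  by (simp add: slantHToeplitz_def Wop_def Pop_def Kop_dlt_even Mop_dlt)

lemma sT_odd: "k \<ge> 0 \<Longrightarrow> m \<ge> 0 \<Longrightarrow> slantHToeplitz psi (dlt (2*k+1)) m = fourier psi (2*m+k+1)"
  by (simp add: slantHToeplitz_def Wop_def Pop_def Kop_dlt_odd Mop_dlt) (simp add: algebra_simps)

lemma coeff_const:
  assumes "\<forall>f. H2seq f \<longrightarrow> slantHankel phi f = slantHToeplitz psi f"
  shows "n \<ge> 1 \<Longrightarrow> fourier phi n = fourier phi 1"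
proof -
  define a where "a = fourier phi" 
  define b where "b = fourier psi"
  have E: "slantHankel phi (dlt j) m = slantHToeplitz psi (dlt j) m" if "j \<ge> 0" for j m
    using assms H2seq_dlt[OF that] by simp
  have O: "a (2*m+2*k+1) = b (2*m-k)" if "k \<ge> 0" "m \<ge> 0" for k m
    using E[of "2*k" m] that sH_dlt[of "2*k" m phi] sT_even[of k m psi] by (simp add: a_def b_def algebra_simps)
  have Ev: "a (2*m+2*k+2) = b (2*m+k+1)" if "k \<ge> 0" "m \<ge> 0" for k m
    using E[of "2*k+1" m] that sH_dlt[of "2*k+1" m phi] sT_odd[of k m psi] by (simp add: a_def b_def algebra_simps)
  have B: "b j = a (j+1)" if "j \<ge> 0" for j
  proof (cases "even j")
    case True then obtain m where "j = 2*m" by (auto elim: evenE)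
    then show ?thesis using O[of 0 m] that by simp
  next
    case False then obtain m where "j = 2*m+1" by (auto elim: oddE)
    then show ?thesis using Ev[of 0 m] that by (simp add: algebra_simps)
  qed
  have O2: "a (2*m+2*k+1) = a (2*m-k+1)" if "k \<ge> 0" "2*m \<ge> k" for k m
    using O[of k m] B[of "2*m-k"] that by simp
  have Ev2: "a (2*m+2*k+2) = a (2*m+k+2)" if "k \<ge> 0" "m \<ge> 0" for k m
    using Ev[of k m] B[of "2*m+k+1"] that by (simp add: algebra_simps)
  have s1: "a (2*m+4) = a (2*m+3)" if "m \<ge> 0" for m using Ev2[of 1 m] that by (simp add: algebra_simps)
  have s2: "a (2*m+3) = a (2*m)" if "m \<ge> 1" for m using O2[of 1 m] that by (simp add: algebra_simps)
  have e6: "a (2*m+6) = a (2*m+4)" if "m \<ge> 0" for m using Ev2[of 2 m] that by (simp add: algebra_simps)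
  have evn4: "a (2*m) = a 4" if "m \<ge> 2" for m
    using that
  proof (induction m rule: int_ge_induct)
    case base then show ?case by simp
  next
    case (step i)
    have "a (2*(i+1)) = a (2*(i-2)+6)" by (simp add: algebra_simps)
    also have "\<dots> = a (2*(i-2)+4)" using e6[of "i-2"] step by simp
    also have "\<dots> = a (2*i)" by (simp add: algebra_simps)
    finally show ?case using step by simp
  qed
  have a24: "a 2 = a 4" using s2[of 1] s1[of 1] e6[of 0] by simp
  have evn: "a (2*m) = a 2" if "m \<ge> 1" for m
    using evn4[of m] a24 that by (cases "m = 1") auto
  have a21: "a 2 = a 1"
  proof -
    have "a 7 = a 1" using O2[of 2 1] by simp
    moreover have "a 7 = a 2" using s2[of 2] a24 by simp
    ultimately show ?thesis by simp
  qed
  assume n: "n \<ge> 1"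
  show "fourier phi n = fourier phi 1"
  proof (cases "even n")
    case True then obtain m where "n = 2*m" by (auto elim: evenE)
    then show ?thesis using evn[of m] n a21 by (simp add: a_def)
  next
    case False then obtain m where m: "n = 2*m+1" by (auto elim: oddE)
    show ?thesis
    proof (cases "m = 0")
      case True then show ?thesis using m by simp
    next
      case False
      then have "m \<ge> 1" using m n by simp
      then have "a (2*(m-1)+3) = a (2*(m-1)+4)" using s1[of "m-1"] by simp
      also have "\<dots> = a (2*(m+1))" by (simp add: algebra_simps)
      also have "\<dots> = a 2" using evn[of "m+1"] \<open>m\<ge>1\<close> by simp
      finally show ?thesis using m a21 by (simp add: a_def algebra_simps)
    qed
  qed
qed



abbreviation TT where "TT \<equiv> lebesgue_on {0..2*pi}"

lemma lm_TT: "{0..2*pi} \<in> lmeasurable"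
  by (metis lmeasurable_cbox interval_cbox)

lemma fin_TT: "finite_measure TT"
  by (rule finite_measure_lebesgue_on[OF lm_TT])

lemma space_TT[simp]: "space TT = {0..2*pi}" by simp

definition BM :: "(real \<Rightarrow> complex) \<Rightarrow> bool" where
  "BM f \<longleftrightarrow> f \<in> borel_measurable TT \<and> (\<exists>B. AE t in TT. norm (f t) \<le> B)"

lemma BM_integrable: "BM f \<Longrightarrow> integrable TT f"
  using finite_measure.integrable_const_bound[OF fin_TT] unfolding BM_def by blast

lemma BM_cont: assumes "continuous_on {0..2*pi} f" shows "BM f"
proof -
  have "f \<in> borel_measurable TT"
    by (rule continuous_imp_measurable_on_sets_lebesgue[OF assms]) auto
  moreover have "compact (f ` {0..2*pi})" by (rule compact_continuous_image[OF assms]) auto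
  then obtain B where "\<forall>x\<in>f ` {0..2*pi}. norm x \<le> B" using compact_imp_bounded bounded_iff by metis
  then have "AE t in TT. norm (f t) \<le> B" by (intro AE_I2) auto
  ultimately show ?thesis unfolding BM_def by blast
qed

lemma BM_add: "BM f \<Longrightarrow> BM g \<Longrightarrow> BM (\<lambda>t. f t + g t)"
  unfolding BM_def
proof (elim conjE exE, intro conjI)
  fix B1 B2 assume "AE t in TT. norm (f t) \<le> B1" "AE t in TT. norm (g t) \<le> B2"
  note a = this
  have "AE t in TT. norm (f t + g t) \<le> B1 + B2"
    by (rule eventually_elim2[OF a]) (smt (verit) norm_triangle_ineq)
  then show "\<exists>B. AE t in TT. norm (f t + g t) \<le> B" by blast
qed auto

lemma BM_mult: "BM f \<Longrightarrow> BM g \<Longrightarrow> BM (\<lambda>t. f t * g t)"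
  unfolding BM_def
proof (elim conjE exE, intro conjI)
  fix B1 B2 assume "AE t in TT. norm (f t) \<le> B1" "AE t in TT. norm (g t) \<le> B2"
  note a = this
  have "AE t in TT. norm (f t * g t) \<le> B1 * B2"
    by (rule eventually_elim2[OF a]) (simp add: norm_mult, meson mult_mono norm_ge_zero order_trans)
  then show "\<exists>B. AE t in TT. norm (f t * g t) \<le> B" by blast
qed auto

lemma BM_cnj: "BM f \<Longrightarrow> BM (\<lambda>t. cnj (f t))"
  unfolding BM_def by (auto intro: borel_measurable_continuous_on[where f=cnj] continuous_intros)

lemma BM_const: "BM (\<lambda>t. c)"
  by (rule BM_cont) auto

lemma BM_minus: "BM f \<Longrightarrow> BM (\<lambda>t. - f t)"
  using BM_mult[OF BM_const[of "-1"]] by simp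

lemma BM_diff: "BM f \<Longrightarrow> BM g \<Longrightarrow> BM (\<lambda>t. f t - g t)"
  using BM_add[OF _ BM_minus] by simp

lemma BM_sum: "finite F \<Longrightarrow> (\<And>i. i \<in> F \<Longrightarrow> BM (f i)) \<Longrightarrow> BM (\<lambda>t. \<Sum>i\<in>F. f i t)"
  by (induction F rule: finite_induct) (auto intro: BM_add BM_const)

lemma BM_cis: "BM (\<lambda>t. cis (a * t))"
  by (rule BM_cont) (intro continuous_intros)

lemma BM_norm2: "BM f \<Longrightarrow> integrable TT (\<lambda>t. (norm (f t))\<^sup>2)"
proof -
  assume "BM f"
  then have "BM (\<lambda>t. f t * cnj (f t))" by (intro BM_mult BM_cnj)
  then have "integrable TT (\<lambda>t. f t * cnj (f t))" by (rule BM_integrable)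
  then have "integrable TT (\<lambda>t. Re (f t * cnj (f t)))" by (rule integrable_Re)
  then show ?thesis by (simp add: complex_mult_cnj cmod_def power2_eq_square[symmetric])
qed

lemma int_cis: "(LINT t|TT. cis (of_int n * t)) = (if n = 0 then 2*pi else 0)"
proof -
  have "(LINT t|TT. cis (of_int n * t)) = integral {0..2*pi} (\<lambda>t. cis (of_int n * t))"
    by (rule lebesgue_integral_eq_integral) (auto intro!: continuous_imp_integrable_real continuous_intros)
  also have "\<dots> = integral {0..2*pi} (\<lambda>t. exp ((\<i> * of_int n) * complex_of_real t))"
    by (simp add: cis_conv_exp mult_ac)
  also have "\<dots> = (if n = 0 then 2*pi else 0)"
  proof (cases "n = 0")
    case True then show ?thesis by (simp add: scaleR_conv_of_real)
  next
    case False
    have "exp ((\<i> * of_int n) * complex_of_real (2*pi)) = exp ((2 * of_int n * pi) * \<i>)" by (simp add: mult_ac)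
    also have "\<dots> = 1" by (rule exp_integer_2pi) simp
    finally show ?thesis using False by (subst integral_exp) auto
  qed
  finally show ?thesis .
qed



definition ecis :: "int \<Rightarrow> real \<Rightarrow> complex" where "ecis n t = cis (of_int n * t)"

definition ip :: "(real \<Rightarrow> complex) \<Rightarrow> (real \<Rightarrow> complex) \<Rightarrow> complex" where
  "ip f g = (LINT t|TT. f t * cnj (g t))"

definition N2 :: "(real \<Rightarrow> complex) \<Rightarrow> real" where
  "N2 f = (LINT t|TT. (norm (f t))\<^sup>2)"

definition trigpoly :: "(real \<Rightarrow> complex) \<Rightarrow> bool" where
  "trigpoly p \<longleftrightarrow> (\<exists>F c. finite F \<and> p = (\<lambda>t. \<Sum>n\<in>F. c n * ecis n t))"

lemma BM_ecis: "BM (ecis n)"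
  unfolding ecis_def using BM_cis by simp

lemma BM_tp: "finite F \<Longrightarrow> BM (\<lambda>t. \<Sum>n\<in>F. c n * ecis n t)"
  by (intro BM_sum BM_mult BM_const BM_ecis)

lemma trigpoly_BM: "trigpoly p \<Longrightarrow> BM p"
  unfolding trigpoly_def using BM_tp by blast

lemma ip_add_left: "BM f \<Longrightarrow> BM g \<Longrightarrow> BM h \<Longrightarrow> ip (\<lambda>t. f t + g t) h = ip f h + ip g h"
  unfolding ip_def by (simp add: distrib_right BM_integrable BM_mult BM_cnj)

lemma ip_diff_left: "BM f \<Longrightarrow> BM g \<Longrightarrow> BM h \<Longrightarrow> ip (\<lambda>t. f t - g t) h = ip f h - ip g h"
  unfolding ip_def by (simp add: left_diff_distrib BM_integrable BM_mult BM_cnj)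

lemma ip_scale_left: "ip (\<lambda>t. c * f t) h = c * ip f h"
  unfolding ip_def by (simp add: mult.assoc)

lemma ip_swap: "ip g f = cnj (ip f g)"
proof -
  have "cnj (ip f g) = (LINT t|TT. cnj (f t * cnj (g t)))" unfolding ip_def
    by (rule Bochner_Integration.integral_cnj[symmetric])
  then show ?thesis unfolding ip_def by (simp add: mult.commute)
qed

lemma ip_sum_left: "finite F \<Longrightarrow> (\<And>i. i \<in> F \<Longrightarrow> BM (f i)) \<Longrightarrow> BM h \<Longrightarrow>
   ip (\<lambda>t. \<Sum>i\<in>F. f i t) h = (\<Sum>i\<in>F. ip (f i) h)"
  unfolding ip_def by (simp add: sum_distrib_right BM_integrable BM_mult BM_cnj integral_sum)

lemma ip_tp: "finite F \<Longrightarrow> BM h \<Longrightarrow>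
   ip (\<lambda>t. \<Sum>n\<in>F. c n * ecis n t) h = (\<Sum>n\<in>F. c n * cnj (ip h (ecis n)))"
  by (subst ip_sum_left) (auto intro!: BM_mult BM_const BM_ecis simp: ip_scale_left ip_swap[of h])

lemma ip_ecis: "ip (ecis n) (ecis m) = (if n = m then 2*pi else 0)"
proof -
  have "ip (ecis n) (ecis m) = (LINT t|TT. cis (of_int (n - m) * t))"
    unfolding ip_def ecis_def by (simp add: cis_cnj cis_mult algebra_simps)
  also have "\<dots> = (if n - m = 0 then 2*pi else 0)" by (rule int_cis)
  finally show ?thesis by simp
qed

lemma ip_self: "ip f f = of_real (N2 f)"
  unfolding ip_def N2_def complex_norm_square[symmetric] by (rule integral_complex_of_real)

lemma N2_nonneg: "N2 f \<ge> 0"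
  unfolding N2_def by simp

lemma amgm_pt: fixes a b d :: real assumes "d > 0" "a \<ge> 0" "b \<ge> 0"
  shows "a * b \<le> (d * a\<^sup>2 + b\<^sup>2 / d) / 2"
proof -
  have "0 \<le> (d * a - b)\<^sup>2 / d" using assms by simp
  also have "\<dots> = d * a\<^sup>2 + b\<^sup>2 / d - 2 * (a * b)" using assms
    by (simp add: power2_eq_square field_simps)
  finally show ?thesis by simp
qed

lemma amgm: assumes "BM u" "BM v" "d > 0"
  shows "norm (ip u v) \<le> (d * N2 u + N2 v / d) / 2"
proof -
  have iu: "integrable TT (\<lambda>t. (norm (u t))\<^sup>2)" "integrable TT (\<lambda>t. (norm (v t))\<^sup>2)"
    using assms BM_norm2 by auto
  have iuv: "integrable TT (\<lambda>t. u t * cnj (v t))" using assms by (intro BM_integrable BM_mult BM_cnj)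
  have "norm (ip u v) \<le> (LINT t|TT. norm (u t * cnj (v t)))"
    unfolding ip_def by (rule integral_norm_bound)
  also have "\<dots> \<le> (LINT t|TT. (d * (norm (u t))\<^sup>2 + (norm (v t))\<^sup>2 / d) / 2)"
  proof (rule integral_mono)
    show "integrable TT (\<lambda>t. norm (u t * cnj (v t)))" by (rule integrable_norm[OF iuv])
    show "integrable TT (\<lambda>t. (d * (norm (u t))\<^sup>2 + (norm (v t))\<^sup>2 / d) / 2)" using iu by auto
    show "norm (u t * cnj (v t)) \<le> (d * (norm (u t))\<^sup>2 + (norm (v t))\<^sup>2 / d) / 2" for t
      using amgm_pt[OF assms(3), of "norm (u t)" "norm (v t)"] by (simp add: norm_mult)
  qed
  also have "\<dots> = (d * N2 u + N2 v / d) / 2"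
    unfolding N2_def using iu by simp
  finally show ?thesis .
qed

lemma N2_diff_sym: "N2 (\<lambda>t. f t - g t) = N2 (\<lambda>t. g t - f t)"
  unfolding N2_def by (simp add: norm_minus_commute)



lemma ORTH:
  assumes f: "BM f" and g: "BM g"
    and f0: "\<And>n. n > 0 \<Longrightarrow> ip f (ecis n) = 0"
    and g0: "\<And>n. n \<le> 0 \<Longrightarrow> ip g (ecis n) = 0"
    and dense: "\<And>e. e > 0 \<Longrightarrow> \<exists>p. trigpoly p \<and> N2 (\<lambda>t. f t - p t) < e"
  shows "ip f g = 0"
proof (rule ccontr)
  define z where "z = ip f g"
  assume "ip f g \<noteq> 0"
  then have zpos: "norm z > 0" by (simp add: z_def)
  define Gg where "Gg = N2 g"
  have Gg0: "Gg \<ge> 0" unfolding Gg_def by (rule N2_nonneg)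
  define \<eta> where "\<eta> = norm z / (4 * (Gg + 1))"
  have eta: "\<eta> > 0" using zpos Gg0 by (simp add: \<eta>_def)
  have etaG: "\<eta> * Gg < norm z / 4"
  proof -
    have "\<eta> * Gg = norm z * (Gg / (4 * (Gg+1)))" by (simp add: \<eta>_def)
    also have "\<dots> < norm z * (1/4)" using zpos Gg0 by (intro mult_strict_left_mono) (auto simp: field_simps)
    finally show ?thesis by simp
  qed
  define e where "e = \<eta> * norm z / 6"
  have e0: "e > 0" using eta zpos by (simp add: e_def)
  obtain p where tp: "trigpoly p" and pe: "N2 (\<lambda>t. f t - p t) < e" using dense[OF e0] by blast
  obtain F c where F: "finite F" and p: "p = (\<lambda>t. \<Sum>n\<in>F. c n * ecis n t)"
    using tp unfolding trigpoly_def by blast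
  define Fp where "Fp = F \<inter> {n. n > 0}"
  define Fm where "Fm = F - {n. n > 0}"
  define pp where "pp = (\<lambda>t. \<Sum>n\<in>Fp. c n * ecis n t)"
  define pm where "pm = (\<lambda>t. \<Sum>n\<in>Fm. c n * ecis n t)"
  have fin: "finite Fp" "finite Fm" using F by (auto simp: Fp_def Fm_def)
  have ppm: "p t = pp t + pm t" for t
    unfolding p pp_def pm_def Fp_def Fm_def by (rule sum.Int_Diff[OF F])
  have Bp: "BM p" using tp by (rule trigpoly_BM)
  have Bpp: "BM pp" unfolding pp_def using fin by (intro BM_tp)
  have Bpm: "BM pm" unfolding pm_def using fin by (intro BM_tp)
  have h1: "BM (\<lambda>t. f t - p t)" using f Bp by (rule BM_diff)
  have h2: "BM (\<lambda>t. p t - f t)" using Bp f by (rule BM_diff)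
  have i1: "ip pm g = 0"
    unfolding pm_def using fin g by (simp add: ip_tp g0 Fm_def)
  have i2: "ip f pp = 0"
    unfolding pp_def using fin f by (subst ip_swap) (simp add: ip_tp f0 Fp_def)
  have i3: "ip pm pp = 0"
  proof -
    have "ip pp (ecis n) = 0" if "n \<in> Fm" for n
      unfolding pp_def using fin that BM_ecis
      by (simp add: ip_tp ip_ecis Fp_def Fm_def)
    then show ?thesis unfolding pm_def using fin Bpp by (simp add: ip_tp)
  qed
  have zsplit: "z = ip (\<lambda>t. f t - p t) g + ip pp g"
  proof -
    have "f = (\<lambda>t. (f t - p t) + (pp t + pm t))" using ppm by (simp add: fun_eq_iff)
    then have "z = ip (\<lambda>t. (f t - p t) + (pp t + pm t)) g" unfolding z_def by simp
    also have "\<dots> = ip (\<lambda>t. f t - p t) g + (ip pp g + ip pm g)"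
      using h1 Bpp Bpm g by (simp add: ip_add_left BM_add)
    finally show ?thesis using i1 by simp
  qed
  define P where "P = N2 pp"
  have P0: "P \<ge> 0" unfolding P_def by (rule N2_nonneg)
  have "complex_of_real P = ip pp pp" unfolding P_def by (simp add: ip_self)
  also have "\<dots> = ip (\<lambda>t. p t - pm t) pp" using ppm by (simp add: fun_eq_iff)
  also have "\<dots> = ip p pp - ip pm pp" using Bp Bpm Bpp by (rule ip_diff_left)
  also have "\<dots> = ip p pp" using i3 by simp
  also have "\<dots> = ip (\<lambda>t. (p t - f t) + f t) pp" by simp
  also have "\<dots> = ip (\<lambda>t. p t - f t) pp + ip f pp" using h2 f Bpp by (rule ip_add_left)
  also have "\<dots> = ip (\<lambda>t. p t - f t) pp" using i2 by simp
  finally have "complex_of_real P = ip (\<lambda>t. p t - f t) pp" .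
  then have "P = norm (ip (\<lambda>t. p t - f t) pp)" using P0 by (metis norm_of_real abs_of_nonneg)
  also have "\<dots> \<le> (2 * N2 (\<lambda>t. p t - f t) + N2 pp / 2) / 2" using h2 Bpp by (rule amgm) simp
  finally have "P \<le> (2 * N2 (\<lambda>t. f t - p t) + P / 2) / 2" using N2_diff_sym[of p f] by (simp add: P_def)
  moreover have "\<And>a. P \<le> (2*a + P/2)/2 \<Longrightarrow> a < e \<Longrightarrow> 0 < e \<Longrightarrow> P \<le> 2*e" by (simp add: field_simps)
  ultimately have Pe: "P \<le> 2 * e" using pe e0 by blast
  have a1: "norm (ip (\<lambda>t. f t - p t) g) \<le> ((1/\<eta>) * N2 (\<lambda>t. f t - p t) + N2 g / (1/\<eta>)) / 2"
    using h1 g by (rule amgm) (use eta in simp)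
  have a2: "norm (ip pp g) \<le> ((1/\<eta>) * N2 pp + N2 g / (1/\<eta>)) / 2"
    using Bpp g by (rule amgm) (use eta in simp)
  have "norm z \<le> norm (ip (\<lambda>t. f t - p t) g) + norm (ip pp g)"
    using zsplit norm_triangle_ineq by metis
  also have "\<dots> \<le> ((1/\<eta>) * e + \<eta> * Gg) / 2 + ((1/\<eta>) * (2*e) + \<eta> * Gg) / 2"
  proof -
    have "(1/\<eta>) * N2 (\<lambda>t. f t - p t) \<le> (1/\<eta>) * e" using pe eta by (intro mult_left_mono) auto
    moreover have "(1/\<eta>) * N2 pp \<le> (1/\<eta>) * (2*e)" using Pe eta by (intro mult_left_mono) (auto simp: P_def)
    moreover have "N2 g / (1/\<eta>) = \<eta> * Gg" by (simp add: Gg_def)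
    moreover have "1/\<eta> * (2*e) = 2 * (1/\<eta> * e)" by simp
    ultimately show ?thesis using a1 a2 by argo
  qed
  also have "\<dots> = 3 * e / (2 * \<eta>) + \<eta> * Gg" using eta by (simp add: field_simps)
  also have "3 * e / (2 * \<eta>) = norm z / 4" using eta by (simp add: e_def field_simps)
  finally show False using etaG zpos by linarith
qed



lemma trigpoly_zero: "trigpoly (\<lambda>t. 0)"
  unfolding trigpoly_def by (rule exI[of _ "{}"]) simp

lemma trigpoly_mono: "trigpoly (\<lambda>t. c * ecis n t)"
  unfolding trigpoly_def by (rule exI[of _ "{n}"], rule exI[of _ "\<lambda>_. c"]) simp

lemma trigpoly_const: "trigpoly (\<lambda>t. c)"
  using trigpoly_mono[of c 0] by (simp add: ecis_def)

lemma trigpoly_add: assumes "trigpoly p" "trigpoly q" shows "trigpoly (\<lambda>t. p t + q t)"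
proof -
  obtain F c where F: "finite F" "p = (\<lambda>t. \<Sum>n\<in>F. c n * ecis n t)" using assms(1) unfolding trigpoly_def by blast
  obtain G d where G: "finite G" "q = (\<lambda>t. \<Sum>n\<in>G. d n * ecis n t)" using assms(2) unfolding trigpoly_def by blast
  define e where "e n = (if n \<in> F then c n else 0) + (if n \<in> G then d n else 0)" for n
  have "(\<Sum>n\<in>F\<union>G. e n * ecis n t) = p t + q t" for t
  proof -
    have pt: "e n * ecis n t = (if n \<in> F then c n * ecis n t else 0) + (if n \<in> G then d n * ecis n t else 0)" for n
      by (simp add: e_def distrib_right)
    have "(\<Sum>n\<in>F\<union>G. e n * ecis n t) = (\<Sum>n\<in>F\<union>G. (if n \<in> F then c n * ecis n t else 0)) + (\<Sum>n\<in>F\<union>G. (if n \<in> G then d n * ecis n t else 0))"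
      by (simp only: pt sum.distrib)
    also have "\<dots> = (\<Sum>n\<in>(F\<union>G)\<inter>F. c n * ecis n t) + (\<Sum>n\<in>(F\<union>G)\<inter>G. d n * ecis n t)"
      using F G by (simp add: sum.inter_restrict[symmetric])
    also have "\<dots> = p t + q t" using F G by (simp add: Int_absorb1)
    finally show ?thesis .
  qed
  then show ?thesis unfolding trigpoly_def using F G by (intro exI[of _ "F \<union> G"] exI[of _ e]) auto
qed

lemma trigpoly_sum: "finite I \<Longrightarrow> (\<And>i. i \<in> I \<Longrightarrow> trigpoly (p i)) \<Longrightarrow> trigpoly (\<lambda>t. \<Sum>i\<in>I. p i t)"
  by (induction I rule: finite_induct) (auto intro: trigpoly_add trigpoly_zero)

lemma trigpoly_mult: assumes "trigpoly p" "trigpoly q" shows "trigpoly (\<lambda>t. p t * q t)"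
proof -
  obtain F c where F: "finite F" "p = (\<lambda>t. \<Sum>n\<in>F. c n * ecis n t)" using assms(1) unfolding trigpoly_def by blast
  obtain G d where G: "finite G" "q = (\<lambda>t. \<Sum>n\<in>G. d n * ecis n t)" using assms(2) unfolding trigpoly_def by blast
  have "p t * q t = (\<Sum>n\<in>F. \<Sum>m\<in>G. (c n * d m) * ecis (n + m) t)" for t
  proof -
    have "p t * q t = (\<Sum>n\<in>F. \<Sum>m\<in>G. (c n * ecis n t) * (d m * ecis m t))"
      unfolding F G by (rule sum_product)
    also have "\<dots> = (\<Sum>n\<in>F. \<Sum>m\<in>G. (c n * d m) * ecis (n + m) t)"
      by (intro sum.cong refl) (simp add: ecis_def cis_mult ring_distribs mult_ac)
    finally show ?thesis .
  qed
  moreover have "trigpoly (\<lambda>t. \<Sum>n\<in>F. \<Sum>m\<in>G. (c n * d m) * ecis (n + m) t)"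
    using F G by (intro trigpoly_sum trigpoly_mono) auto
  ultimately show ?thesis by (simp add: fun_eq_iff)
qed

lemma trigpoly_scale: "trigpoly p \<Longrightarrow> trigpoly (\<lambda>t. c * p t)"
  using trigpoly_mult[OF trigpoly_const] by blast

lemma trigpoly_diff: "trigpoly p \<Longrightarrow> trigpoly q \<Longrightarrow> trigpoly (\<lambda>t. p t - q t)"
  using trigpoly_add[of p "\<lambda>t. -1 * q t"] trigpoly_scale[of q "-1"] by simp

lemma trigpoly_linear:
  assumes "bounded_linear (g :: complex \<Rightarrow> real)"
  shows "trigpoly (\<lambda>t. complex_of_real (g (cis t)))"
proof -
  interpret linear g using assms by (rule bounded_linear.linear)
  define A where "A = (complex_of_real (g 1) - \<i> * complex_of_real (g \<i>)) / 2"
  define B where "B = (complex_of_real (g 1) + \<i> * complex_of_real (g \<i>)) / 2"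
  have "cis t = cos t *\<^sub>R 1 + sin t *\<^sub>R \<i>" for t by (simp add: complex_eq_iff)
  then have "g (cis t) = cos t * g 1 + sin t * g \<i>" for t by (simp add: add scale)
  then have "complex_of_real (g (cis t)) = A * ecis 1 t + B * ecis (-1) t" for t
    by (auto simp: A_def B_def ecis_def complex_eq_iff field_simps)
  moreover have "trigpoly (\<lambda>t. A * ecis 1 t + B * ecis (-1) t)"
    by (intro trigpoly_add trigpoly_mono)
  ultimately show ?thesis by (simp add: fun_eq_iff)
qed

lemma trigpoly_rpf:
  "real_polynomial_function g \<Longrightarrow> trigpoly (\<lambda>t. complex_of_real (g (cis t)))"
proof (induction g rule: real_polynomial_function.induct)
  case (linear f) then show ?case by (rule trigpoly_linear)
next
  case (const c) then show ?case by (rule trigpoly_const)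
next
  case (add f g) then show ?case by (simp add: trigpoly_add)
next
  case (mult f g) then show ?case by (simp add: trigpoly_mult)
qed



lemma meas_TT: "measure TT {0..2*pi} = 2*pi"
proof -
  have "complex_of_real (measure TT {0..2*pi}) = 2*pi" using int_cis[of 0] by (simp add: scaleR_conv_of_real)
  then show ?thesis by (simp add: complex_eq_iff)
qed

lemma int_const: "(LINT t|TT. (c::real)) = 2*pi*c"
  using meas_TT by simp

lemma N2_add_le: assumes "BM u" "BM v"
  shows "N2 (\<lambda>t. u t + v t) \<le> 2 * N2 u + 2 * N2 v"
proof -
  have pt: "(norm (a + b))\<^sup>2 \<le> 2 * (norm a)\<^sup>2 + 2 * (norm b)\<^sup>2" for a b :: complex
  proof -
    have "(norm (a + b))\<^sup>2 \<le> (norm a + norm b)\<^sup>2" by (intro power_mono norm_triangle_ineq) simp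
    also have "\<dots> \<le> 2 * (norm a)\<^sup>2 + 2 * (norm b)\<^sup>2"
      using sum_squares_ge_zero[of "norm a - norm b" 0] by (simp add: power2_eq_square algebra_simps)
    finally show ?thesis .
  qed
  have "N2 (\<lambda>t. u t + v t) \<le> (LINT t|TT. 2 * (norm (u t))\<^sup>2 + 2 * (norm (v t))\<^sup>2)"
    unfolding N2_def
  proof (rule integral_mono)
    show "integrable TT (\<lambda>t. (norm (u t + v t))\<^sup>2)" by (intro BM_norm2 BM_add assms)
    show "integrable TT (\<lambda>t. 2 * (norm (u t))\<^sup>2 + 2 * (norm (v t))\<^sup>2)"
      using BM_norm2[OF assms(1)] BM_norm2[OF assms(2)] by simp
  qed (rule pt)
  also have "\<dots> = 2 * N2 u + 2 * N2 v" unfolding N2_def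
    using BM_norm2[OF assms(1)] BM_norm2[OF assms(2)] by simp
  finally show ?thesis .
qed

lemma N2_scale: "N2 (\<lambda>t. c * u t) = (norm c)\<^sup>2 * N2 u"
  unfolding N2_def by (simp add: norm_mult power_mult_distrib)

lemma N2_cong_AE: assumes "BM u" "BM v" "AE t in TT. u t = v t" shows "N2 u = N2 v"
  unfolding N2_def
proof (rule integral_cong_AE)
  show "(\<lambda>t. (norm (u t))\<^sup>2) \<in> borel_measurable TT" using BM_norm2[OF assms(1)] by auto
  show "(\<lambda>t. (norm (v t))\<^sup>2) \<in> borel_measurable TT" using BM_norm2[OF assms(2)] by auto
  show "AE t in TT. (norm (u t))\<^sup>2 = (norm (v t))\<^sup>2" using assms(3) by eventually_elim simp
qed

definition appr :: "(real \<Rightarrow> complex) \<Rightarrow> bool" where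
  "appr f \<longleftrightarrow> (\<forall>e>0. \<exists>p. trigpoly p \<and> N2 (\<lambda>t. f t - p t) < e)"

lemma appr_close:
  assumes f: "BM f" and A: "\<And>e. e > 0 \<Longrightarrow> \<exists>g. BM g \<and> appr g \<and> N2 (\<lambda>t. f t - g t) < e"
  shows "appr f"
  unfolding appr_def
proof (intro allI impI)
  fix e :: real assume e: "e > 0"
  have e4: "e/4 > 0" using e by simp
  obtain g where g: "BM g" "appr g" "N2 (\<lambda>t. f t - g t) < e/4" using A[OF e4] by blast
  obtain p where p: "trigpoly p" "N2 (\<lambda>t. g t - p t) < e/4" using g(2) e4 unfolding appr_def by blast
  have Bp: "BM p" using p(1) by (rule trigpoly_BM)
  have "N2 (\<lambda>t. f t - p t) = N2 (\<lambda>t. (f t - g t) + (g t - p t))" by simp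
  also have "\<dots> \<le> 2 * N2 (\<lambda>t. f t - g t) + 2 * N2 (\<lambda>t. g t - p t)"
    by (intro N2_add_le BM_diff f g Bp)
  also have "\<dots> < e" using g(3) p(2) by argo
  finally show "\<exists>p. trigpoly p \<and> N2 (\<lambda>t. f t - p t) < e" using p(1) by blast
qed

lemma appr_add:
  assumes f: "BM f" "appr f" and g: "BM g" "appr g"
  shows "appr (\<lambda>t. f t + g t)"
  unfolding appr_def
proof (intro allI impI)
  fix e :: real assume e: "e > 0"
  have e4: "e/4 > 0" using e by simp
  obtain p where p: "trigpoly p" "N2 (\<lambda>t. f t - p t) < e/4" using f(2) e4 unfolding appr_def by blast
  obtain q where q: "trigpoly q" "N2 (\<lambda>t. g t - q t) < e/4" using g(2) e4 unfolding appr_def by blast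
  have Bp: "BM p" "BM q" using p(1) q(1) by (auto intro: trigpoly_BM)
  have "N2 (\<lambda>t. f t + g t - (p t + q t)) = N2 (\<lambda>t. (f t - p t) + (g t - q t))" by (simp add: algebra_simps)
  also have "\<dots> \<le> 2 * N2 (\<lambda>t. f t - p t) + 2 * N2 (\<lambda>t. g t - q t)"
    by (intro N2_add_le BM_diff f g Bp)
  also have "\<dots> < e" using q(2) p(2) by argo
  finally show "\<exists>r. trigpoly r \<and> N2 (\<lambda>t. f t + g t - r t) < e"
    using trigpoly_add[OF p(1) q(1)] by blast
qed

lemma appr_scale:
  assumes f: "appr f" shows "appr (\<lambda>t. c * f t)"
  unfolding appr_def
proof (intro allI impI)
  fix e :: real assume e: "e > 0"
  have c2: "(norm c)\<^sup>2 + 1 > 0" by (simp add: add_nonneg_pos)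
  obtain p where p: "trigpoly p" "N2 (\<lambda>t. f t - p t) < e / ((norm c)\<^sup>2 + 1)"
    using f e c2 unfolding appr_def by (meson divide_pos_pos)
  have "N2 (\<lambda>t. c * f t - c * p t) = (norm c)\<^sup>2 * N2 (\<lambda>t. f t - p t)"
    using N2_scale[of c "\<lambda>t. f t - p t"] by (simp add: algebra_simps)
  also have "\<dots> \<le> ((norm c)\<^sup>2 + 1) * N2 (\<lambda>t. f t - p t)"
    using N2_nonneg by (intro mult_right_mono) auto
  also have "\<dots> < ((norm c)\<^sup>2 + 1) * (e / ((norm c)\<^sup>2 + 1))"
    using c2 p(2) by (intro mult_strict_left_mono) auto
  also have "\<dots> = e" using c2 by simp
  finally show "\<exists>r. trigpoly r \<and> N2 (\<lambda>t. c * f t - r t) < e"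
    using trigpoly_scale[OF p(1)] by blast
qed

lemma appr_sum:
  "finite I \<Longrightarrow> (\<And>i. i \<in> I \<Longrightarrow> BM (f i) \<and> appr (f i)) \<Longrightarrow> appr (\<lambda>t. \<Sum>i\<in>I. f i t)"
proof (induction I rule: finite_induct)
  case empty
  then show ?case unfolding appr_def using trigpoly_zero by (intro allI impI exI[of _ "\<lambda>t. 0"]) (simp add: N2_def)
next
  case (insert x F)
  then show ?case by (simp, intro appr_add BM_sum) auto
qed

lemma appr_cong_AE: "BM f \<Longrightarrow> BM g \<Longrightarrow> AE t in TT. f t = g t \<Longrightarrow> appr g \<Longrightarrow> appr f"
  unfolding appr_def
proof (intro allI impI)
  fix e :: real assume "BM f" "BM g" "AE t in TT. f t = g t" "\<forall>e>0. \<exists>p. trigpoly p \<and> N2 (\<lambda>t. g t - p t) < e" "e > 0"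
  then obtain p where p: "trigpoly p" "N2 (\<lambda>t. g t - p t) < e" by auto
  have "N2 (\<lambda>t. f t - p t) = N2 (\<lambda>t. g t - p t)"
    using \<open>BM f\<close> \<open>BM g\<close> trigpoly_BM[OF p(1)] \<open>AE t in TT. f t = g t\<close>
    by (intro N2_cong_AE BM_diff) (auto elim: eventually_mono)
  then show "\<exists>p. trigpoly p \<and> N2 (\<lambda>t. f t - p t) < e" using p by auto
qed

lemma appr_cont:
  assumes G: "continuous_on (sphere 0 1) (G :: complex \<Rightarrow> real)"
  shows "appr (\<lambda>t. complex_of_real (G (cis t)))"
  unfolding appr_def
proof (intro allI impI)
  fix e :: real assume e: "e > 0"
  define \<eta> where "\<eta> = min 1 (e / (4*pi))"
  have eta: "\<eta> > 0" "\<eta> \<le> 1" using e by (auto simp: \<eta>_def)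
  obtain g where g: "real_polynomial_function g" "\<And>x. x \<in> sphere 0 1 \<Longrightarrow> \<bar>G x - g x\<bar> < \<eta>"
    using Stone_Weierstrass_real_polynomial_function[OF compact_sphere G eta(1)] by blast
  have tp: "trigpoly (\<lambda>t. complex_of_real (g (cis t)))" by (rule trigpoly_rpf[OF g(1)])
  have BG: "BM (\<lambda>t. complex_of_real (G (cis t)))"
  proof (rule BM_cont)
    have "continuous_on {0..2*pi} cis" by (intro continuous_intros)
    moreover have "cis ` {0..2*pi} \<subseteq> sphere 0 1" by auto
    ultimately have "continuous_on {0..2*pi} (\<lambda>t. G (cis t))"
      by (rule continuous_on_compose2[OF G])
    then show "continuous_on {0..2*pi} (\<lambda>t. complex_of_real (G (cis t)))"
      by (intro continuous_intros)
  qed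
  have Bd: "BM (\<lambda>t. complex_of_real (G (cis t)) - complex_of_real (g (cis t)))"
    using BG trigpoly_BM[OF tp] by (rule BM_diff)
  have "N2 (\<lambda>t. complex_of_real (G (cis t)) - complex_of_real (g (cis t))) \<le> (LINT t|TT. \<eta>\<^sup>2)"
    unfolding N2_def
  proof (rule integral_mono)
    show "integrable TT (\<lambda>t. (norm (complex_of_real (G (cis t)) - complex_of_real (g (cis t))))\<^sup>2)"
      by (rule BM_norm2[OF Bd])
    show "integrable TT (\<lambda>t. \<eta>\<^sup>2)" using fin_TT by (simp add: finite_measure.integrable_const)
    fix t assume "t \<in> space TT"
    have "\<bar>G (cis t) - g (cis t)\<bar> < \<eta>" by (rule g(2)) simp
    then have "(norm (complex_of_real (G (cis t)) - complex_of_real (g (cis t))))\<^sup>2 \<le> \<eta>\<^sup>2"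
      by (simp only: of_real_diff[symmetric] norm_of_real) (intro power_mono, auto)
    then show "(norm (complex_of_real (G (cis t)) - complex_of_real (g (cis t))))\<^sup>2 \<le> \<eta>\<^sup>2" .
  qed
  also have "\<dots> = 2*pi*\<eta>\<^sup>2" by (rule int_const)
  also have "\<dots> \<le> 2*pi*\<eta>" using eta by (intro mult_left_mono) (auto simp: power2_eq_square mult_le_cancel_left1)
  also have "\<dots> \<le> 2*pi*(e/(4*pi))" by (intro mult_left_mono) (auto simp: \<eta>_def)
  also have "\<dots> < e" using e by simp
  finally show "\<exists>p. trigpoly p \<and> N2 (\<lambda>t. complex_of_real (G (cis t)) - p t) < e" using tp by blast
qed



lemma BM_ind: "A \<in> sets lebesgue \<Longrightarrow> BM (\<lambda>t. indicator A t :: complex)"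
  unfolding BM_def
proof (intro conjI)
  assume "A \<in> sets lebesgue"
  then have "(indicator A :: real \<Rightarrow> complex) \<in> borel_measurable lebesgue" by simp
  then show "(\<lambda>t. indicator A t :: complex) \<in> borel_measurable TT"
    by (simp add: measurable_restrict_space1)
  show "\<exists>B. AE t in TT. norm (indicator A t :: complex) \<le> B"
    by (intro exI[of _ 1] AE_I2) (simp add: indicator_def)
qed

lemma cis_inj_aux:
  assumes t: "t \<in> {0<..<2*pi}" and s: "s \<in> {0..2*pi}" and eq: "cis t = cis s"
  shows "t = s"
proof -
  have "exp (\<i> * complex_of_real t) = exp (\<i> * complex_of_real s)" using eq by (simp add: cis_conv_exp)
  then obtain n :: int where n: "\<i> * complex_of_real t = \<i> * complex_of_real s + (of_int (2 * n) * pi) * \<i>"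
    unfolding exp_eq by blast
  then have h: "t - s = 2 * pi * of_int n"
    by (auto simp: complex_eq_iff)
  have t': "0 < t" "t < 2*pi" using t by auto
  have s': "0 \<le> s" "s \<le> 2*pi" using s by auto
  have n1: "of_int n < (1::real)"
  proof (rule ccontr)
    assume "\<not> of_int n < (1::real)"
    then have "(1::real) \<le> of_int n" by simp
    then have "2*pi*1 \<le> 2*pi* of_int n" by (rule mult_left_mono) auto
    then show False using h t' s' by linarith
  qed
  have n2: "-1 < (of_int n::real)"
  proof (rule ccontr)
    assume "\<not> -1 < (of_int n::real)"
    then have "of_int n \<le> (-1::real)" by simp
    then have "2*pi* of_int n \<le> 2*pi*(-1)" by (rule mult_left_mono) auto
    then show False using h t' s' by linarith
  qed
  from n1 have "n < 1" by simp
  moreover from n2 have "-1 < n" by simp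
  ultimately have "n = 0" by simp
  then show ?thesis using h by simp
qed

lemma appr_ind_open:
  assumes U: "open U" "U \<subseteq> {0<..<2*pi}"
  shows "appr (\<lambda>t. indicator U t :: complex)"
proof -
  have Ul: "U \<in> sets lebesgue"
  proof -
    have "bounded U" using U(2) by (intro bounded_subset[OF bounded_closed_interval[of 0 "2*pi"]]) auto
    then show ?thesis using lmeasurable_open[OF _ U(1)] fmeasurableD by blast
  qed
  define K where "K = {0..2*pi} - U"
  have Kc: "compact K" unfolding K_def using U(1) by (intro compact_diff) auto
  define C where "C = cis ` K"
  have Cc: "compact C" unfolding C_def by (intro compact_continuous_image continuous_intros Kc)
  then have Ccl: "closed C" by (rule compact_imp_closed)
  have "0 \<in> K" using U(2) by (auto simp: K_def)
  then have C0: "C \<noteq> {}" unfolding C_def by blast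
  define G where "G = (\<lambda>k z. min 1 (real (Suc k) * infdist z C))"
  have Gc: "continuous_on (sphere 0 1) (G k)" for k
    unfolding G_def by (intro continuous_intros)
  have BG: "BM (\<lambda>t. complex_of_real (G k (cis t)))" for k
  proof (rule BM_cont)
    have "continuous_on UNIV (G k)" unfolding G_def by (intro continuous_intros)
    moreover have "continuous_on {0..2*pi} cis" by (intro continuous_intros)
    ultimately have "continuous_on {0..2*pi} (\<lambda>t. G k (cis t))"
      using continuous_on_compose2[of UNIV "G k" "{0..2*pi}" cis] by blast
    then show "continuous_on {0..2*pi} (\<lambda>t. complex_of_real (G k (cis t)))"
      by (intro continuous_intros)
  qed
  have lim: "(\<lambda>k. G k (cis t)) \<longlonglongrightarrow> indicator U t" if t: "t \<in> {0..2*pi}" for t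
  proof (cases "t \<in> U")
    case True
    have "cis t \<notin> C"
    proof
      assume "cis t \<in> C"
      then obtain s where s: "s \<in> K" "cis t = cis s" unfolding C_def by auto
      have "t = s" using cis_inj_aux[of t s] True U(2) s by (auto simp: K_def)
      then show False using s True by (simp add: K_def)
    qed
    then have d: "infdist (cis t) C > 0" using in_closed_iff_infdist_zero[OF Ccl C0] infdist_nonneg
      by (metis less_eq_real_def)
    obtain N :: nat where N: "1 / infdist (cis t) C < real N" using reals_Archimedean2 by blast
    have "G k (cis t) = 1" if "k \<ge> N" for k
    proof -
      have "1 < real N * infdist (cis t) C" using N d by (simp add: field_simps)
      also have "\<dots> \<le> real (Suc k) * infdist (cis t) C" using that d by (intro mult_right_mono) auto
      finally show ?thesis by (simp add: G_def)
    qed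
    then have "eventually (\<lambda>k. G k (cis t) = 1) sequentially" by (rule eventually_sequentiallyI)
    then have "(\<lambda>k. G k (cis t)) \<longlonglongrightarrow> 1" by (rule tendsto_eventually)
    then show ?thesis using True by simp
  next
    case False
    then have "cis t \<in> C" using t unfolding C_def K_def by blast
    then have "infdist (cis t) C = 0" using in_closed_iff_infdist_zero[OF Ccl C0] by blast
    then show ?thesis using False by (simp add: G_def)
  qed
  define sq where "sq k t = (norm (indicator U t - complex_of_real (G k (cis t))))\<^sup>2" for k t
  have Bd: "BM (\<lambda>t. indicator U t - complex_of_real (G k (cis t)))" for k
    using BM_ind[OF Ul] BG by (rule BM_diff)
  have conv: "(\<lambda>k. LINT t|TT. sq k t) \<longlonglongrightarrow> (LINT t|TT. 0)"
  proof (rule integral_dominated_convergence[where w = "\<lambda>t. 1"])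
    show "(\<lambda>t. 0::real) \<in> borel_measurable TT" by simp
    show "sq k \<in> borel_measurable TT" for k
      unfolding sq_def using BM_norm2[OF Bd] by auto
    show "integrable TT (\<lambda>t. 1::real)" using fin_TT by (simp add: finite_measure.integrable_const)
    show "AE t in TT. (\<lambda>k. sq k t) \<longlonglongrightarrow> 0"
    proof (rule AE_I2)
      fix t assume "t \<in> space TT"
      then have "(\<lambda>k. complex_of_real (G k (cis t))) \<longlonglongrightarrow> complex_of_real (indicator U t)"
        using lim by (intro tendsto_of_real) auto
      then have "(\<lambda>k. indicator U t - complex_of_real (G k (cis t))) \<longlonglongrightarrow> indicator U t - complex_of_real (indicator U t)"
        by (intro tendsto_diff tendsto_const)
      then have "(\<lambda>k. (norm (indicator U t - complex_of_real (G k (cis t))))\<^sup>2) \<longlonglongrightarrow> (norm (indicator U t - complex_of_real (indicator U t) :: complex))\<^sup>2"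
        by (intro tendsto_power tendsto_norm)
      moreover have "(norm (indicator U t - complex_of_real (indicator U t) :: complex))\<^sup>2 = 0"
        by (simp add: indicator_def)
      ultimately show "(\<lambda>k. sq k t) \<longlonglongrightarrow> 0" unfolding sq_def by metis
    qed
    show "AE t in TT. norm (sq k t) \<le> 1" for k
    proof (rule AE_I2)
      fix t
      have g01: "0 \<le> G k (cis t)" "G k (cis t) \<le> 1" by (auto simp: G_def infdist_nonneg)
      have "indicator U t - complex_of_real (G k (cis t)) = complex_of_real (indicator U t - G k (cis t))"
        by (simp add: indicator_def)
      moreover have "\<bar>indicator U t - G k (cis t)\<bar> \<le> (1::real)"
        using g01 by (auto simp: indicator_def)
      ultimately have "norm (indicator U t - complex_of_real (G k (cis t))) \<le> 1"
        by (simp only: norm_of_real)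
      then show "norm (sq k t) \<le> 1" unfolding sq_def
        by (simp add: power_le_one)
    qed
  qed
  show ?thesis
  proof (rule appr_close[OF BM_ind[OF Ul]])
    fix e :: real assume e: "e > 0"
    from conv have "eventually (\<lambda>k. LINT t|TT. sq k t < e) sequentially"
      using e by (simp add: order_tendstoD(2))
    then obtain k where k: "(LINT t|TT. sq k t) < e" by (auto simp: eventually_sequentially)
    have "appr (\<lambda>t. complex_of_real (G k (cis t)))" by (rule appr_cont[OF Gc])
    moreover have "N2 (\<lambda>t. indicator U t - complex_of_real (G k (cis t))) < e"
      using k by (simp add: N2_def sq_def)
    ultimately show "\<exists>g. BM g \<and> appr g \<and> N2 (\<lambda>t. indicator U t - g t) < e" using BG by blast
  qed
qed



lemma Ilm: "{0..2*pi} \<in> sets lebesgue" by simp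

lemma sets_TT: "A \<in> sets TT \<longleftrightarrow> A \<subseteq> {0..2*pi} \<and> A \<in> sets lebesgue"
  by (rule sets_restrict_space_iff) simp

lemma int_ind_real: assumes "X \<in> sets lebesgue"
  shows "integrable TT (\<lambda>t. indicator X t :: real)"
proof -
  have "integrable TT (\<lambda>t. Re (indicator X t :: complex))"
    by (intro integrable_Re BM_integrable BM_ind assms)
  moreover have "(\<lambda>t. Re (indicator X t :: complex)) = (\<lambda>t. indicator X t)"
    by (auto simp: fun_eq_iff indicator_def)
  ultimately show ?thesis by simp
qed

lemma appr_ind:
  assumes A: "A \<in> sets lebesgue"
  shows "appr (\<lambda>t. indicator A t :: complex)"
proof (rule appr_close[OF BM_ind[OF A]])
  fix e :: real assume e: "e > 0"
  define A' where "A' = A \<inter> {0<..<2*pi}"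
  have A'l: "A' \<in> sets lebesgue" unfolding A'_def using A by auto
  obtain T where T: "open T" "A' \<subseteq> T" "(T - A') \<in> lmeasurable" "emeasure lebesgue (T - A') < ennreal e"
    using sets_lebesgue_outer_open[OF A'l e] by blast
  define U where "U = T \<inter> {0<..<2*pi}"
  have Uo: "open U" unfolding U_def using T(1) by auto
  have Us: "U \<subseteq> {0<..<2*pi}" unfolding U_def by auto
  have Ul: "U \<in> sets lebesgue"
  proof -
    have "bounded U" using Us by (intro bounded_subset[OF bounded_closed_interval[of 0 "2*pi"]]) auto
    then show ?thesis using lmeasurable_open[OF _ Uo] fmeasurableD by blast
  qed
  have aU: "appr (\<lambda>t. indicator U t :: complex)" by (rule appr_ind_open[OF Uo Us])
  have BU: "BM (\<lambda>t. indicator U t :: complex)" by (rule BM_ind[OF Ul])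
  have TAl: "T - A' \<in> sets lebesgue" using T(3) fmeasurableD by blast
  have null: "{0, 2*pi} \<in> null_sets TT" by simp
  have pw: "AE t in TT. (norm (indicator A t - indicator U t :: complex))\<^sup>2 \<le> indicator (T - A') t"
  proof (rule eventually_elim2[OF AE_space AE_not_in[OF null]])
    fix t assume "t \<in> space TT" "t \<notin> {0, 2*pi}"
    then have t: "t \<in> {0<..<2*pi}" by auto
    show "(norm (indicator A t - indicator U t :: complex))\<^sup>2 \<le> indicator (T - A') t"
    proof (cases "t \<in> A")
      case True
      then have "t \<in> A'" "t \<in> U" using t T(2) by (auto simp: A'_def U_def)
      then show ?thesis using True by simp
    next
      case False
      then have "t \<notin> A'" by (simp add: A'_def)
      then show ?thesis using False by (auto simp: indicator_def U_def)
    qed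
  qed
  have "N2 (\<lambda>t. indicator A t - indicator U t) \<le> (LINT t|TT. indicator (T - A') t)"
    unfolding N2_def
    by (rule integral_mono_AE[OF BM_norm2[OF BM_diff[OF BM_ind[OF A] BU]] int_ind_real[OF TAl] pw])
  also have "\<dots> = measure TT ((T - A') \<inter> {0..2*pi})" by simp
  also have "\<dots> = measure lebesgue ((T - A') \<inter> {0..2*pi})"
    by (rule measure_restrict_space) auto
  also have "\<dots> \<le> measure lebesgue (T - A')"
    using TAl T(3) by (intro measure_mono_fmeasurable) auto
  also have "\<dots> < e"
    using T(4) T(3) e by (simp add: emeasure_eq_measure2 ennreal_less_iff)
  finally show "\<exists>g. BM g \<and> appr g \<and> N2 (\<lambda>t. indicator A t - g t) < e" using aU BU by blast
qed

lemma simple_BM: assumes s: "simple_function TT s" shows "BM (s :: real \<Rightarrow> complex)"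
  unfolding BM_def
proof (intro conjI)
  show "s \<in> borel_measurable TT" by (rule borel_measurable_simple_function[OF s])
  have fin: "finite (s ` space TT)" using s by (rule simple_functionD(1))
  have "norm (s t) \<le> (\<Sum>y\<in>s ` space TT. norm y)" if "t \<in> space TT" for t
    using fin that by (intro member_le_sum) auto
  then show "\<exists>B. AE t in TT. norm (s t) \<le> B" by (intro exI AE_I2) blast
qed

lemma appr_simple: assumes s: "simple_function TT s" shows "appr (s :: real \<Rightarrow> complex)"
proof -
  define S where "S = s ` space TT"
  have fin: "finite S" using s unfolding S_def by (rule simple_functionD(1))
  have sets: "s -` {y} \<inter> space TT \<in> sets lebesgue" for y
    using simple_functionD(2)[OF s, of "{y}"] sets_TT by blast
  have sets': "s -` {y} \<inter> {0..2*pi} \<in> sets lebesgue" for y using sets[of y] by simp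
  define r where "r = (\<lambda>t. \<Sum>y\<in>S. y * indicator (s -` {y} \<inter> space TT) t)"
  have Br: "BM r" unfolding r_def using fin sets by (intro BM_sum BM_mult BM_const BM_ind) auto
  have ar: "appr r" unfolding r_def using fin
    by (intro appr_sum) (auto intro!: BM_mult BM_const BM_ind appr_scale appr_ind sets sets')
  have eq: "s t = r t" if "t \<in> space TT" for t
  proof -
    have "r t = (\<Sum>y\<in>S. if y = s t then y else 0)" unfolding r_def
      by (intro sum.cong refl) (use that in \<open>auto simp: indicator_def\<close>)
    also have "\<dots> = s t" using fin that by (simp add: S_def)
    finally show ?thesis by simp
  qed
  show ?thesis
    by (rule appr_cong_AE[OF simple_BM[OF s] Br _ ar]) (use eq in \<open>auto intro: AE_I2\<close>)
qed

lemma appr_BM: assumes f: "BM f" shows "appr f"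
proof -
  have fm: "f \<in> borel_measurable TT" and "\<exists>B. AE t in TT. norm (f t) \<le> B" using f unfolding BM_def by auto
  then obtain B where B: "AE t in TT. norm (f t) \<le> B" by blast
  obtain F where F: "\<And>i. simple_function TT (F i)" "\<And>x. x \<in> space TT \<Longrightarrow> (\<lambda>i. F i x) \<longlonglongrightarrow> f x"
    "\<And>i x. x \<in> space TT \<Longrightarrow> dist (F i x) 0 \<le> 2 * dist (f x) 0"
    using borel_measurable_implies_sequence_metric[OF fm, of 0] by blast
  define sq where "sq i t = (norm (f t - F i t))\<^sup>2" for i t
  have BF: "BM (F i)" for i by (rule simple_BM[OF F(1)])
  have conv: "(\<lambda>i. LINT t|TT. sq i t) \<longlonglongrightarrow> (LINT t|TT. 0)"
  proof (rule integral_dominated_convergence[where w = "\<lambda>t. (3*B)\<^sup>2"])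
    show "(\<lambda>t. 0::real) \<in> borel_measurable TT" by simp
    show "sq i \<in> borel_measurable TT" for i
      unfolding sq_def using BM_norm2[OF BM_diff[OF f BF]] by auto
    show "integrable TT (\<lambda>t. (3*B)\<^sup>2)" using fin_TT by (simp add: finite_measure.integrable_const)
    show "AE t in TT. (\<lambda>i. sq i t) \<longlonglongrightarrow> 0"
    proof (rule AE_I2)
      fix t assume t: "t \<in> space TT"
      have "(\<lambda>i. (norm (f t - F i t))\<^sup>2) \<longlonglongrightarrow> (norm (f t - f t))\<^sup>2"
        by (intro tendsto_power tendsto_norm tendsto_diff tendsto_const F(2) t)
      then show "(\<lambda>i. sq i t) \<longlonglongrightarrow> 0" by (simp add: sq_def)
    qed
    show "AE t in TT. norm (sq i t) \<le> (3*B)\<^sup>2" for i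
      using eventually_elim2[OF AE_space B]
    proof -
      have "AE t in TT. t \<in> space TT \<and> norm (f t) \<le> B" using AE_space B by eventually_elim auto
      then show ?thesis
      proof eventually_elim
        case (elim t)
        then have "norm (F i t) \<le> 2 * norm (f t)" using F(3)[of t i] by simp
        then have "norm (f t - F i t) \<le> 3 * B" using elim norm_triangle_ineq4[of "f t" "F i t"] by linarith
        moreover have "0 \<le> norm (f t - F i t)" by simp
        ultimately have "(norm (f t - F i t))\<^sup>2 \<le> (3*B)\<^sup>2" by (rule power_mono)
        then show ?case by (simp add: sq_def)
      qed
    qed
  qed
  show ?thesis
  proof (rule appr_close[OF f])
    fix e :: real assume e: "e > 0"
    from conv have "eventually (\<lambda>i. LINT t|TT. sq i t < e) sequentially"
      using e by (simp add: order_tendstoD(2))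
    then obtain i where i: "(LINT t|TT. sq i t) < e" by (auto simp: eventually_sequentially)
    then have "N2 (\<lambda>t. f t - F i t) < e" by (simp add: N2_def sq_def)
    then show "\<exists>g. BM g \<and> appr g \<and> N2 (\<lambda>t. f t - g t) < e"
      using BF appr_simple[OF F(1)] by blast
  qed
qed



lemma Linf_BM: "Linf phi \<Longrightarrow> BM (\<lambda>t. phi (cis t))"
  unfolding Linf_def BM_def by auto

lemma fourier_ip: "fourier phi n = ip (\<lambda>t. phi (cis t)) (ecis n) / (2*pi)"
  unfolding fourier_def ip_def ecis_def by (simp add: cis_cnj)

lemma ip_fourier: "ip (\<lambda>t. phi (cis t)) (ecis n) = 2 * complex_of_real pi * fourier phi n"
  unfolding fourier_ip by simp

lemma ip_q:
  assumes "BM f" and that: "finite F"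
  shows "ip f (\<lambda>t. \<Sum>n\<in>F. ecis n t) = (\<Sum>n\<in>F. ip f (ecis n))"
proof -
  have "ip f (\<lambda>t. \<Sum>n\<in>F. ecis n t) = cnj (ip (\<lambda>t. \<Sum>n\<in>F. ecis n t) f)"
    by (subst ip_swap) simp
  also have "\<dots> = (\<Sum>n\<in>F. ip f (ecis n))" using ip_tp[of F f "\<lambda>_. 1"] that assms by simp
  finally show ?thesis .
qed

lemma N2_q: "N2 (\<lambda>t. \<Sum>n\<in>{1..int N}. ecis n t) = 2*pi*N"
proof -
  have B: "BM (\<lambda>t. \<Sum>n\<in>{1..int N}. ecis n t)" using BM_tp[of "{1..int N}" "\<lambda>_. 1"] by simp
  have "complex_of_real (N2 (\<lambda>t. \<Sum>n\<in>{1..int N}. ecis n t)) = ip (\<lambda>t. \<Sum>n\<in>{1..int N}. ecis n t) (\<lambda>t. \<Sum>n\<in>{1..int N}. ecis n t)"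
    by (simp add: ip_self)
  also have "\<dots> = (\<Sum>m\<in>{1..int N}. ip (\<lambda>t. \<Sum>n\<in>{1..int N}. ecis n t) (ecis m))"
    using B by (simp add: ip_q)
  also have "\<dots> = (\<Sum>m\<in>{1..int N}. complex_of_real (2*pi))"
  proof (intro sum.cong refl)
    fix m assume m: "m \<in> {1..int N}"
    have "ip (\<lambda>t. \<Sum>n\<in>{1..int N}. 1 * ecis n t) (ecis m) = (\<Sum>n\<in>{1..int N}. 1 * cnj (ip (ecis m) (ecis n)))"
      by (rule ip_tp) (auto intro: BM_ecis)
    also have "\<dots> = (\<Sum>n\<in>{1..int N}. if m = n then complex_of_real (2*pi) else 0)"
      by (intro sum.cong refl) (simp add: ip_ecis)
    also have "\<dots> = complex_of_real (2*pi)" using m by simp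
    finally show "ip (\<lambda>t. \<Sum>n\<in>{1..int N}. ecis n t) (ecis m) = complex_of_real (2*pi)" by simp
  qed
  also have "\<dots> = complex_of_real (2*pi*N)" by simp
  finally show ?thesis by (simp add: complex_eq_iff)
qed

lemma c_zero:
  fixes c :: complex
  assumes f: "BM f" and c: "\<And>n. n \<ge> 1 \<Longrightarrow> ip f (ecis n) = 2 * complex_of_real pi * c"
  shows "c = 0"
proof (rule ccontr)
  assume "c \<noteq> 0"
  define a where "a = norm c"
  have a: "a > 0" using \<open>c \<noteq> 0\<close> by (simp add: a_def)
  define F where "F = N2 f"
  have F: "F \<ge> 0" unfolding F_def by (rule N2_nonneg)
  define \<eta> where "\<eta> = 2*pi*a/(F+1)"
  have eta: "\<eta> > 0" using a F by (simp add: \<eta>_def)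
  obtain N :: nat where N: "1/(\<eta>*a) < real N" using reals_Archimedean2 by blast
  have Npos: "real N > 0" using N eta a by (smt (verit) divide_pos_pos mult_pos_pos)
  define q where "q = (\<lambda>t. \<Sum>n\<in>{1..int N}. ecis n t)"
  have Bq: "BM q" unfolding q_def using BM_tp[of "{1..int N}" "\<lambda>_. 1"] by simp
  have "ip f q = (\<Sum>n\<in>{1..int N}. ip f (ecis n))" unfolding q_def using f by (simp add: ip_q)
  also have "\<dots> = (\<Sum>n\<in>{1..int N}. 2 * complex_of_real pi * c)" using c by (intro sum.cong) auto
  also have "\<dots> = of_nat N * (2 * complex_of_real pi * c)" by simp
  finally have ipq: "norm (ip f q) = 2*pi*real N*a" by (simp add: norm_mult a_def)
  define d where "d = real N * \<eta>"
  have d: "d > 0" using Npos eta by (simp add: d_def)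
  have "norm (ip f q) \<le> (d * F + N2 q / d) / 2" unfolding F_def by (rule amgm[OF f Bq d])
  also have "N2 q / d = 2*pi/\<eta>" unfolding q_def N2_q d_def using Npos by simp
  also have "d * F \<le> 2*pi*real N*a"
  proof -
    have "\<eta> * F \<le> 2*pi*a" using a F by (simp add: \<eta>_def field_simps)
    then have "real N * (\<eta> * F) \<le> real N * (2*pi*a)" using Npos by (intro mult_left_mono) auto
    then show ?thesis by (simp add: d_def mult_ac)
  qed
  finally have "2*pi*real N*a \<le> (2*pi*real N*a + 2*pi/\<eta>)/2" unfolding ipq by (simp add: divide_right_mono)
  then have "2*pi*real N*a \<le> 2*pi/\<eta>" by (simp add: field_simps)
  then have "2*pi*(real N*a) \<le> 2*pi*(1/\<eta>)" by (simp add: mult.assoc)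
  then have "real N*a \<le> 1/\<eta>" by (rule mult_left_le_imp_le) simp
  then have "real N \<le> 1/(\<eta>*a)" using a eta by (simp add: field_simps)
  then show False using N by simp
qed

lemma main_final:
  assumes "Linf phi"
    and "\<exists>psi. Linf psi \<and> (\<forall>f. H2seq f \<longrightarrow> slantHankel phi f = slantHToeplitz psi f)"
  shows "\<forall>h\<in>Hinf. l2inner phi (\<lambda>z. z + z ^ 3 * h z) = 0"
proof
  fix h assume h: "h \<in> Hinf"
  obtain psi where psi: "\<forall>f. H2seq f \<longrightarrow> slantHankel phi f = slantHToeplitz psi f" using assms(2) by blast
  define f where "f = (\<lambda>t. phi (cis t))"
  have Bf: "BM f" unfolding f_def by (rule Linf_BM[OF assms(1)])
  have cc: "ip f (ecis n) = 2 * complex_of_real pi * fourier phi 1" if "n \<ge> 1" for n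
    using coeff_const[OF psi that] ip_fourier[of phi n] by (simp add: f_def)
  have c0: "fourier phi 1 = 0" by (rule c_zero[OF Bf cc])
  have f0: "ip f (ecis n) = 0" if "n > 0" for n using cc[of n] c0 that by simp
  have hL: "Linf h" and hneg: "\<And>n. n < 0 \<Longrightarrow> fourier h n = 0" using h unfolding Hinf_def by auto
  define g where "g = (\<lambda>t. cis t + cis t ^ 3 * h (cis t))"
  have Bh: "BM (\<lambda>t. h (cis t))" by (rule Linf_BM[OF hL])
  have Bc: "BM (\<lambda>t. cis t)" using BM_cis[of 1] by simp
  have Bc3: "BM (\<lambda>t. cis t ^ 3 * h (cis t))" unfolding power3_eq_cube
    by (intro BM_mult Bc Bh)
  have Bg: "BM g" unfolding g_def by (intro BM_add Bc Bc3)
  have g0: "ip g (ecis n) = 0" if "n \<le> 0" for n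
  proof -
    have "ip g (ecis n) = ip (ecis 1) (ecis n) + ip (\<lambda>t. cis t ^ 3 * h (cis t)) (ecis n)"
    proof -
      have e1: "ecis 1 = cis" by (simp add: fun_eq_iff ecis_def)
      show ?thesis unfolding g_def e1 using ip_add_left[OF Bc Bc3 BM_ecis[of n]] by simp
    qed
    also have "ip (ecis 1) (ecis n) = 0" using that by (simp add: ip_ecis)
    also have "ip (\<lambda>t. cis t ^ 3 * h (cis t)) (ecis n) = ip (\<lambda>t. h (cis t)) (ecis (n - 3))"
      unfolding ip_def ecis_def
    proof (intro Bochner_Integration.integral_cong refl)
      fix x :: real
      have c3: "cis x ^ 3 = cis (3 * x)" using Complex.DeMoivre[of x 3] by simp
      show "cis x ^ 3 * h (cis x) * cnj (cis (of_int n * x)) = h (cis x) * cnj (cis (of_int (n - 3) * x))"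
        unfolding c3 by (simp add: cis_cnj mult.assoc mult.left_commute[of "h (cis x)"] cis_mult algebra_simps)
    qed
    also have "\<dots> = 2 * complex_of_real pi * fourier h (n - 3)" by (rule ip_fourier)
    also have "\<dots> = 0" using hneg[of "n-3"] that by simp
    finally show ?thesis by simp
  qed
  have dense: "\<exists>p. trigpoly p \<and> N2 (\<lambda>t. f t - p t) < e" if "e > 0" for e
    using appr_BM[OF Bf] that unfolding appr_def by blast
  have "ip f g = 0" by (rule ORTH[OF Bf Bg f0 g0 dense])
  then show "l2inner phi (\<lambda>z. z + z ^ 3 * h z) = 0"
    unfolding l2inner_def ip_def f_def g_def by simp
qed


theorem mainTheorem13:
  fixes phi :: "complex \<Rightarrow> complex"
  assumes "Linf phi"
    and "\<exists>psi. Linf psi \<and> (\<forall>f. H2seq f \<longrightarrow> slantHankel phi f = slantHToeplitz psi f)"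
  shows "\<forall>h\<in>Hinf. l2inner phi (\<lambda>z. z + z ^ 3 * h z) = 0"
  by (rule main_final[OF assms])

end
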